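(* Let $n\ge2$ and let $\epsilon,\phi>0$ with $\epsilon\phi=1$ and $\epsilon\ne1$. Then the eigenpairs of $T_{n,\epsilon,\phi}$ are exactly (up to scaling of eigenvectors) the following $n$ pairs: the outlier $\lambda=\epsilon+\epsilon^{-1}=\epsilon+\phi$ with eigenvector $\mathbf v=[\epsilon^{-i+1}]_{i=1}^n=[\phi^{i-1}]_{i=1}^n$; and, for $k=1,\ldots,n-1$, $\lambda_k=2\cos\theta_k$ with eigenvector $\mathbf v^{(k)}=[\sin(i\theta_k)-\epsilon\sin((i-1)\theta_k)]_{i=1}^n$, where $\theta_k=k\pi/n$. Equivalently, with $V_{n,\epsilon}=[\mathbf v\,|\,\mathbf v^{(1)}\,|\cdots|\,\mathbf v^{(n-1)}]$ (invertible), $T_{n,\epsilon,\phi}=V_{n,\epsilon}\,\mathrm{diag}\bigl(\epsilon+\epsilon^{-1},2\cos\tfrac{\pi}{n},\ldots,2\cos\tfrac{(n-1)\pi}{n}\bigr)V_{n,\epsilon}^{-1}$.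
   Context: $T_{n,\epsilon,\phi}$ is the real symmetric tridiagonal $n\times n$ matrix with diagonal entries $(\epsilon,0,\ldots,0,\phi)$ and all sub- and super-diagonal entries equal to $1$. An outlier is an eigenvalue not in $[-2,2]$. *)

theory Defs
  imports "Jordan_Normal_Form.Char_Poly"
begin

text \<open>Indices are 0-based: row/column i here corresponds to i+1 in the paper.\<close>

definition T_mat :: "nat \<Rightarrow> real \<Rightarrow> real \<Rightarrow> real mat" where
  "T_mat n \<epsilon> \<phi> = mat n n (\<lambda>(i,j).
      if i = j then (if i = 0 then \<epsilon> else if i = n - 1 then \<phi> else 0)
      else if i + 1 = j \<or> j + 1 = i then 1 else 0)"

definition theta :: "nat \<Rightarrow> nat \<Rightarrow> real" where
  "theta n k = real k * pi / real n"

definition v_out :: "nat \<Rightarrow> real \<Rightarrow> real vec" where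
  "v_out n \<phi> = vec n (\<lambda>i. \<phi> ^ i)"

definition v_k :: "nat \<Rightarrow> real \<Rightarrow> nat \<Rightarrow> real vec" where
  "v_k n \<epsilon> k = vec n (\<lambda>i. sin (real (i + 1) * theta n k) - \<epsilon> * sin (real i * theta n k))"

definition V_mat :: "nat \<Rightarrow> real \<Rightarrow> real mat" where
  "V_mat n \<epsilon> = mat n n (\<lambda>(i,j). if j = 0 then (1 / \<epsilon>) ^ i
      else sin (real (i + 1) * theta n j) - \<epsilon> * sin (real i * theta n j))"

definition D_mat :: "nat \<Rightarrow> real \<Rightarrow> real mat" where
  "D_mat n \<epsilon> = mat n n (\<lambda>(i,j). if i = j then
      (if i = 0 then \<epsilon> + 1 / \<epsilon> else 2 * cos (theta n i)) else 0)"

end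

theory Submission
  imports Defs
begin

lemma self_sprod_pos:
  fixes x :: "real vec"
  assumes x: "x \<in> carrier_vec n" and nz: "x \<noteq> 0\<^sub>v n"
  shows "x \<bullet> x > 0"
proof -
  from nz x obtain i where i: "i < n" "x $ i \<noteq> 0" by (metis eq_vecI carrier_vecD index_zero_vec(1) index_zero_vec(2))
  have "x \<bullet> x = (\<Sum>k\<in>{0..<n}. x $ k * x $ k)" using x unfolding scalar_prod_def by simp
  also have "\<dots> \<ge> x $ i * x $ i" by (rule member_le_sum) (use i in auto)
  moreover have "x $ i * x $ i > 0" using i(2) by (metis not_real_square_gt_zero)
  ultimately show ?thesis by linarith
qed

lemma abstract_sym:
  fixes T V :: "real mat" and d :: "nat \<Rightarrow> real"
  assumes T: "T \<in> carrier_mat n n" and Ts: "transpose_mat T = T"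
    and V: "V \<in> carrier_mat n n"
    and eig: "\<And>j. j < n \<Longrightarrow> T *\<^sub>v col V j = d j \<cdot>\<^sub>v col V j"
    and nz: "\<And>j. j < n \<Longrightarrow> col V j \<noteq> 0\<^sub>v n"
    and inj: "inj_on d {..<n}"
  shows "\<exists>W. W \<in> carrier_mat n n \<and> W * V = 1\<^sub>m n \<and> V * W = 1\<^sub>m n"
    and "T * V = V * mat n n (\<lambda>(i,j). if i = j then d i else 0)"
    and "\<And>v lam. eigenvector T v lam \<longleftrightarrow> (\<exists>j<n. lam = d j \<and> (\<exists>c. c \<noteq> 0 \<and> v = c \<cdot>\<^sub>v col V j))"
proof -
  have colc: "\<And>j. col V j \<in> carrier_vec n" using V by auto
  have symm: "\<And>x y. x \<in> carrier_vec n \<Longrightarrow> y \<in> carrier_vec n \<Longrightarrow> (T *\<^sub>v x) \<bullet> y = x \<bullet> (T *\<^sub>v y)"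
    using transpose_vec_mult_scalar[OF T] Ts by metis
  have orth: "col V j \<bullet> col V l = 0" if "j < n" "l < n" "j \<noteq> l" for j l
  proof -
    have "d j * (col V j \<bullet> col V l) = (T *\<^sub>v col V j) \<bullet> col V l"
      using eig[OF that(1)] colc by simp
    also have "\<dots> = col V j \<bullet> (T *\<^sub>v col V l)" by (rule symm[OF colc colc])
    also have "\<dots> = d l * (col V j \<bullet> col V l)" using eig[OF that(2)] colc by simp
    finally have "(d j - d l) * (col V j \<bullet> col V l) = 0" by (simp add: algebra_simps)
    moreover have "d j \<noteq> d l" using inj that unfolding inj_on_def by auto
    ultimately show ?thesis by simp
  qed
  define g where "g j = col V j \<bullet> col V j" for j
  have gpos: "g j > 0" if "j < n" for j using self_sprod_pos[OF colc nz[OF that]] g_def by simp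
  define W where "W = mat n n (\<lambda>(j,i). V $$ (i,j) / g j)"
  have Wc: "W \<in> carrier_mat n n" unfolding W_def by simp
  have rowW: "row W j = (1 / g j) \<cdot>\<^sub>v col V j" if "j < n" for j
    unfolding W_def using that V by (intro eq_vecI) auto
  have WV: "W * V = 1\<^sub>m n"
  proof (rule eq_matI)
    fix j l assume "j < dim_row (1\<^sub>m n :: real mat)" "l < dim_col (1\<^sub>m n :: real mat)"
    hence jl: "j < n" "l < n" by auto
    have "(W * V) $$ (j, l) = row W j \<bullet> col V l" using Wc V jl by simp
    also have "\<dots> = (1 / g j) * (col V j \<bullet> col V l)" using rowW[OF jl(1)] colc by simp
    also have "\<dots> = 1\<^sub>m n $$ (j, l)" using orth[OF jl] gpos[OF jl(1)] jl g_def by auto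
    finally show "(W * V) $$ (j, l) = 1\<^sub>m n $$ (j, l)" .
  qed (use Wc V in auto)
  have VW: "V * W = 1\<^sub>m n" by (rule mat_mult_left_right_inverse[OF Wc V WV])
  show "\<exists>W. W \<in> carrier_mat n n \<and> W * V = 1\<^sub>m n \<and> V * W = 1\<^sub>m n" using Wc WV VW by blast
  show "T * V = V * mat n n (\<lambda>(i,j). if i = j then d i else 0)"
  proof (rule eq_matI)
    fix i j assume "i < dim_row (V * mat n n (\<lambda>(i,j). if i = j then d i else 0))"
      "j < dim_col (V * mat n n (\<lambda>(i,j). if i = j then d i else 0))"
    hence ij: "i < n" "j < n" using V by auto
    have "(T * V) $$ (i, j) = (T *\<^sub>v col V j) $ i" using T V ij by simp
    also have "\<dots> = d j * V $$ (i, j)" using eig[OF ij(2)] ij V by simp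
    finally have 1: "(T * V) $$ (i, j) = d j * V $$ (i, j)" .
    have "col (mat n n (\<lambda>(i,j). if i = j then d i else 0)) j = d j \<cdot>\<^sub>v unit_vec n j"
      using ij by (intro eq_vecI) (auto simp: unit_vec_def)
    hence "(V * mat n n (\<lambda>(i,j). if i = j then d i else 0)) $$ (i, j) = row V i \<bullet> (d j \<cdot>\<^sub>v unit_vec n j)"
      using ij V by simp
    also have "\<dots> = d j * V $$ (i, j)" using ij V by simp
    finally show "(T * V) $$ (i, j) = (V * mat n n (\<lambda>(i,j). if i = j then d i else 0)) $$ (i, j)"
      using 1 by simp
  qed (use T V in auto)
  fix v lam
  show "eigenvector T v lam \<longleftrightarrow> (\<exists>j<n. lam = d j \<and> (\<exists>c. c \<noteq> 0 \<and> v = c \<cdot>\<^sub>v col V j))"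
  proof
    assume ev: "eigenvector T v lam"
    hence vc: "v \<in> carrier_vec n" and vnz: "v \<noteq> 0\<^sub>v n" and Tv: "T *\<^sub>v v = lam \<cdot>\<^sub>v v"
      using T unfolding eigenvector_def by auto
    define c where "c = W *\<^sub>v v"
    have cc: "c \<in> carrier_vec n" unfolding c_def using Wc vc by simp
    have vVc: "v = V *\<^sub>v c" unfolding c_def using VW Wc V vc
      by (metis assoc_mult_mat_vec one_mult_mat_vec)
    have ci: "c $ j = (col V j \<bullet> v) / g j" if "j < n" for j
      unfolding c_def using that rowW[OF that] Wc colc vc smult_scalar_prod_distrib[OF colc vc] by simp
    have key: "(d j - lam) * c $ j = 0" if "j < n" for j
    proof -
      have "d j * (col V j \<bullet> v) = (T *\<^sub>v col V j) \<bullet> v" using eig[OF that] colc vc smult_scalar_prod_distrib[OF colc vc] by simp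
      also have "\<dots> = col V j \<bullet> (T *\<^sub>v v)" by (rule symm[OF colc vc])
      also have "\<dots> = lam * (col V j \<bullet> v)" using Tv colc vc scalar_prod_smult_distrib[OF colc vc] by simp
      finally show ?thesis using ci[OF that] by (simp add: algebra_simps)
    qed
    have "\<exists>j<n. c $ j \<noteq> 0"
    proof (rule ccontr)
      assume "\<not> ?thesis"
      hence "c = 0\<^sub>v n" using cc by (intro eq_vecI) auto
      hence "v = 0\<^sub>v n" using vVc V by (intro eq_vecI) (auto simp: scalar_prod_def)
      thus False using vnz by simp
    qed
    then obtain j where j: "j < n" "c $ j \<noteq> 0" by blast
    have lamj: "lam = d j" using key[OF j(1)] j(2) by simp
    have cl: "c $ l = 0" if "l < n" "l \<noteq> j" for l
    proof -
      have "d l \<noteq> d j" using inj that j unfolding inj_on_def by auto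
      thus ?thesis using key[OF that(1)] lamj by simp
    qed
    have "v = c $ j \<cdot>\<^sub>v col V j"
    proof (rule eq_vecI)
      fix i assume "i < dim_vec (c $ j \<cdot>\<^sub>v col V j)"
      hence i: "i < n" using V by simp
      have "v $ i = (\<Sum>l\<in>{0..<n}. V $$ (i, l) * c $ l)"
        using vVc V cc i by (simp add: scalar_prod_def)
      also have "\<dots> = (\<Sum>l\<in>{0..<n}. if l = j then V $$ (i, j) * c $ j else 0)"
        by (rule sum.cong) (use cl in auto)
      also have "\<dots> = V $$ (i, j) * c $ j" using j by simp
      finally show "v $ i = (c $ j \<cdot>\<^sub>v col V j) $ i" using i j V by simp
    qed (use vc V in auto)
    thus "\<exists>j<n. lam = d j \<and> (\<exists>c. c \<noteq> 0 \<and> v = c \<cdot>\<^sub>v col V j)" using j lamj by blast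
  next
    assume "\<exists>j<n. lam = d j \<and> (\<exists>c. c \<noteq> 0 \<and> v = c \<cdot>\<^sub>v col V j)"
    then obtain j c where j: "j < n" "lam = d j" "c \<noteq> 0" "v = c \<cdot>\<^sub>v col V j" by blast
    have "v \<noteq> 0\<^sub>v n"
    proof
      assume "v = 0\<^sub>v n"
      have "col V j = 0\<^sub>v n"
      proof (rule eq_vecI)
        fix i assume "i < dim_vec (0\<^sub>v n :: real vec)"
        hence i: "i < n" by simp
        have "c * col V j $ i = 0" using \<open>v = 0\<^sub>v n\<close> j i colc[of j]
          by (metis carrier_vecD index_smult_vec(1) index_zero_vec(1))
        thus "col V j $ i = 0\<^sub>v n $ i" using j i by simp
      qed (use colc V in auto)
      thus False using nz j by simp
    qed
    moreover have "T *\<^sub>v v = lam \<cdot>\<^sub>v v"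
      using j eig[OF j(1)] mult_mat_vec[OF T colc] by (simp add: smult_smult_assoc mult.commute)
    ultimately show "eigenvector T v lam" unfolding eigenvector_def using T j colc by simp
  qed
qed

lemma T_carrier: "T_mat n e p \<in> carrier_mat n n" unfolding T_mat_def by simp

lemma T_sym: "transpose_mat (T_mat n e p) = T_mat n e p"
  unfolding T_mat_def by (rule eq_matI) auto

lemma T_row:
  assumes n: "n \<ge> 2" and i: "i < n"
  shows "(T_mat n e p *\<^sub>v vec n f) $ i =
     (if i = 0 then e * f 0 else f (i - 1)) + (if i = n - 1 then p * f (n - 1) else f (i + 1))"
proof -
  have "(T_mat n e p *\<^sub>v vec n f) $ i = (\<Sum>j\<in>{0..<n}. T_mat n e p $$ (i, j) * f j)"
    using i unfolding T_mat_def by (simp add: scalar_prod_def)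
  also have "\<dots> = (\<Sum>j\<in>{0..<n}. (if j = i then (if i = 0 then e else if i = n - 1 then p else 0) * f i else 0)
       + (if j = i + 1 then f j else 0) + (if j + 1 = i then f j else 0))"
    by (rule sum.cong) (use i in \<open>auto simp: T_mat_def\<close>)
  also have "\<dots> = (if i = 0 then e else if i = n - 1 then p else 0) * f i
       + (if i + 1 < n then f (i + 1) else 0) + (if i \<ge> 1 then f (i - 1) else 0)"
  proof -
    have a: "(\<Sum>j\<in>{0..<n}. (if j + 1 = i then f j else 0)) = (\<Sum>j\<in>{0..<n}. (if j = i - 1 \<and> i \<ge> 1 then f (i - 1) else 0))"
      by (rule sum.cong) auto
    show ?thesis unfolding sum.distrib using i a by (simp add: sum.delta) linarith
  qed
  also have "\<dots> = (if i = 0 then e * f 0 else f (i - 1)) + (if i = n - 1 then p * f (n - 1) else f (i + 1))"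
    using n i by (cases "i = 0") auto
  finally show ?thesis .
qed

lemma sin_rec: "sin (real (m + 2) * t) + sin (real m * t) = 2 * cos t * sin (real (m + 1) * t)"
proof -
  have "real (m + 2) * t = real (m + 1) * t + t" "real m * t = real (m + 1) * t - t"
    by (simp_all add: algebra_simps)
  thus ?thesis by (simp add: sin_add sin_diff)
qed

lemma out_eig:
  assumes n: "n \<ge> 2" and e: "e > 0" and p: "p = 1 / e"
  shows "T_mat n e p *\<^sub>v vec n (\<lambda>i. (1 / e) ^ i) = (e + 1 / e) \<cdot>\<^sub>v vec n (\<lambda>i. (1 / e) ^ i)"
proof (rule eq_vecI)
  fix i assume "i < dim_vec ((e + 1 / e) \<cdot>\<^sub>v vec n (\<lambda>i. (1 / e) ^ i))"
  hence i: "i < n" by simp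
  show "(T_mat n e p *\<^sub>v vec n (\<lambda>i. (1 / e) ^ i)) $ i = ((e + 1 / e) \<cdot>\<^sub>v vec n (\<lambda>i. (1 / e) ^ i)) $ i"
  proof (cases "i = 0")
    case True thus ?thesis using n i e p by (simp add: T_row)
  next
    case False
    then obtain m where m: "i = Suc m" by (cases i) auto
    show ?thesis
    proof (cases "i = n - 1")
      case True
      hence nm: "n - 1 = Suc m" using m by simp
      show ?thesis using n i e p m True by (simp add: T_row nm field_simps)
    next
      case False
      hence "Suc i < n" using i by simp
      thus ?thesis using n i e p m False by (simp add: T_row field_simps)
    qed
  qed
qed (simp add: T_mat_def)

lemma k_eig_abs:
  fixes s :: "nat \<Rightarrow> real"
  assumes n: "n \<ge> 2" and ep: "e * p = 1"
    and rec: "\<And>m. s (m + 2) + s m = c * s (m + 1)" and s0: "s 0 = 0" and sn: "s n = 0"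
  shows "T_mat n e p *\<^sub>v vec n (\<lambda>i. s (i + 1) - e * s i) = c \<cdot>\<^sub>v vec n (\<lambda>i. s (i + 1) - e * s i)"
proof (rule eq_vecI)
  fix i assume "i < dim_vec (c \<cdot>\<^sub>v vec n (\<lambda>i. s (i + 1) - e * s i))"
  hence i: "i < n" by simp
  show "(T_mat n e p *\<^sub>v vec n (\<lambda>i. s (i + 1) - e * s i)) $ i = (c \<cdot>\<^sub>v vec n (\<lambda>i. s (i + 1) - e * s i)) $ i"
  proof (cases "i = 0")
    case True
    have r: "s (Suc (Suc 0)) + s 0 = c * s 1" using rec[of 0] by simp
    show ?thesis using True n i r s0 by (simp add: T_row algebra_simps)
  next
    case False
    then obtain m where m: "i = Suc m" by (cases i) auto
    show ?thesis
    proof (cases "i = n - 1")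
      case True
      hence nm: "n - 1 = Suc m" "n = m + 2" using m n by auto
      have r: "s (m + 2) + s m = c * s (m + 1)" by (rule rec)
      have sn': "s (m + 2) = 0" using sn nm by simp
      have "p * (e * s (Suc m)) = s (Suc m)" using ep by (simp add: algebra_simps)
      thus ?thesis using n i m True r sn' by (simp add: T_row nm(1) algebra_simps)
    next
      case False
      hence si: "Suc i < n" using i by simp
      have r1: "s (Suc (Suc m)) + s m = c * s (Suc m)" using rec[of m] by simp
      have r2: "s (Suc (Suc (Suc m))) + s (Suc m) = c * s (Suc (Suc m))" using rec[of "m+1"] by simp
      have r3: "e * s m + e * s (Suc (Suc m)) = c * (e * s (Suc m))"
      proof -
        have "e * (s (Suc (Suc m)) + s m) = e * (c * s (Suc m))" using r1 by simp
        thus ?thesis by (simp add: algebra_simps)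
      qed
      show ?thesis using n i m False si r1 r2 r3 by (simp add: T_row algebra_simps)
    qed
  qed
qed (simp add: T_mat_def)

theorem mainTheorem11:
  fixes n :: nat and \<epsilon> \<phi> :: real
  assumes "n \<ge> 2" and "\<epsilon> > 0" and "\<phi> > 0" and "\<epsilon> * \<phi> = 1" and "\<epsilon> \<noteq> 1"
  shows "(\<forall>v lam. eigenvector (T_mat n \<epsilon> \<phi>) v lam \<longleftrightarrow>
            ((lam = \<epsilon> + \<phi> \<and> (\<exists>c. c \<noteq> 0 \<and> v = c \<cdot>\<^sub>v v_out n \<phi>)) \<or>
             (\<exists>k \<in> {1..<n}. lam = 2 * cos (theta n k) \<and> (\<exists>c. c \<noteq> 0 \<and> v = c \<cdot>\<^sub>v v_k n \<epsilon> k))))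
       \<and> \<epsilon> + \<phi> = \<epsilon> + 1 / \<epsilon>
       \<and> v_out n \<phi> = vec n (\<lambda>i. (1 / \<epsilon>) ^ i)
       \<and> invertible_mat (V_mat n \<epsilon>)
       \<and> (\<exists>W. inverts_mat (V_mat n \<epsilon>) W \<and> inverts_mat W (V_mat n \<epsilon>)
              \<and> T_mat n \<epsilon> \<phi> = V_mat n \<epsilon> * D_mat n \<epsilon> * W)"
proof -
  note n = assms(1) and e = assms(2) and ep = assms(4) and e1 = assms(5)
  have p: "\<phi> = 1 / \<epsilon>" using ep e by (simp add: field_simps)
  define d where "d j = (if j = 0 then \<epsilon> + 1 / \<epsilon> else 2 * cos (theta n j))" for j
  let ?T = "T_mat n \<epsilon> \<phi>" and ?V = "V_mat n \<epsilon>"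
  have Tc: "?T \<in> carrier_mat n n" by (rule T_carrier)
  have Vc: "?V \<in> carrier_mat n n" unfolding V_mat_def by simp
  have col0: "col ?V 0 = v_out n \<phi>" using n unfolding V_mat_def v_out_def p by (intro eq_vecI) auto
  have colk: "col ?V j = v_k n \<epsilon> j" if "1 \<le> j" "j < n" for j
    using that unfolding V_mat_def v_k_def by (intro eq_vecI) auto
  have vout: "v_out n \<phi> = vec n (\<lambda>i. (1 / \<epsilon>) ^ i)" unfolding v_out_def p ..
  have thpos: "0 < theta n j" "theta n j < pi" if "1 \<le> j" "j < n" for j
    using that n by (auto simp: theta_def field_simps)
  have eig: "?T *\<^sub>v col ?V j = d j \<cdot>\<^sub>v col ?V j" if "j < n" for j
  proof (cases "j = 0")
    case True thus ?thesis using out_eig[OF n e p] col0 vout d_def by simp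
  next
    case False
    define s where "s m = sin (real m * theta n j)" for m
    have vk: "v_k n \<epsilon> j = vec n (\<lambda>i. s (i + 1) - \<epsilon> * s i)" unfolding v_k_def s_def ..
    have rec: "s (m + 2) + s m = 2 * cos (theta n j) * s (m + 1)" for m
      unfolding s_def by (rule sin_rec)
    have sn: "s n = 0" unfolding s_def theta_def using n
      by (simp add: field_simps)
    show ?thesis using k_eig_abs[OF n ep rec _ sn] colk[of j] that False d_def vk
      by (simp add: s_def)
  qed
  have nz: "col ?V j \<noteq> 0\<^sub>v n" if "j < n" for j
  proof
    assume z: "col ?V j = 0\<^sub>v n"
    have "col ?V j $ 0 = 0" using z n by simp
    moreover have "col ?V j $ 0 \<noteq> 0"
    proof (cases "j = 0")
      case True thus ?thesis using n unfolding V_mat_def by simp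
    next
      case False
      have "sin (theta n j) > 0" using thpos[of j] that False by (intro sin_gt_zero) auto
      thus ?thesis using n that unfolding V_mat_def using False by simp
    qed
    ultimately show False by simp
  qed
  have big: "\<epsilon> + 1 / \<epsilon> > 2"
  proof -
    have "(\<epsilon> - 1)^2 > 0" using e1 by simp
    hence "\<epsilon> * \<epsilon> + 1 > 2 * \<epsilon>" by (simp add: power2_eq_square algebra_simps)
    thus ?thesis using e by (simp add: field_simps)
  qed
  have inj: "inj_on d {..<n}"
  proof (rule inj_onI)
    fix j l assume jl: "j \<in> {..<n}" "l \<in> {..<n}" "d j = d l"
    show "j = l"
    proof (cases "j = 0"; cases "l = 0")
      assume "j = 0" "l \<noteq> 0"
      thus ?thesis using jl big cos_le_one[of "theta n l"] d_def by auto
    next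
      assume "j \<noteq> 0" "l = 0"
      thus ?thesis using jl big cos_le_one[of "theta n j"] d_def by auto
    next
      assume a: "j \<noteq> 0" "l \<noteq> 0"
      hence "cos (theta n j) = cos (theta n l)" using jl d_def by simp
      moreover have "1 \<le> j" "j < n" "1 \<le> l" "l < n" using a jl by auto
      ultimately have "theta n j = theta n l"
        using thpos[of j] thpos[of l] by (metis cos_inj_pi less_eq_real_def)
      thus ?thesis using n unfolding theta_def by simp
    qed simp
  qed
  note ab = abstract_sym[OF Tc T_sym Vc eig nz inj]
  obtain W where W: "W \<in> carrier_mat n n" "W * ?V = 1\<^sub>m n" "?V * W = 1\<^sub>m n" using ab(1) by blast
  have Dm: "D_mat n \<epsilon> = mat n n (\<lambda>(i,j). if i = j then d i else 0)"
    unfolding D_mat_def d_def by (rule eq_matI) auto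
  have Dc: "D_mat n \<epsilon> \<in> carrier_mat n n" unfolding D_mat_def by simp
  have TVDW: "?T = ?V * D_mat n \<epsilon> * W"
  proof -
    have "?T = ?T * (?V * W)" using W Tc by simp
    also have "\<dots> = (?T * ?V) * W" using Tc Vc W by simp
    also have "\<dots> = ?V * D_mat n \<epsilon> * W" using ab(2) Dm by simp
    finally show ?thesis .
  qed
  have inv1: "inverts_mat ?V W" "inverts_mat W ?V" unfolding inverts_mat_def using W Vc by auto
  have invV: "invertible_mat ?V" unfolding invertible_mat_def using inv1 Vc by auto
  have char: "eigenvector ?T v lam \<longleftrightarrow>
            ((lam = \<epsilon> + \<phi> \<and> (\<exists>c. c \<noteq> 0 \<and> v = c \<cdot>\<^sub>v v_out n \<phi>)) \<or>
             (\<exists>k \<in> {1..<n}. lam = 2 * cos (theta n k) \<and> (\<exists>c. c \<noteq> 0 \<and> v = c \<cdot>\<^sub>v v_k n \<epsilon> k)))" for v lam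
  proof -
    have "eigenvector ?T v lam \<longleftrightarrow> (\<exists>j<n. lam = d j \<and> (\<exists>c. c \<noteq> 0 \<and> v = c \<cdot>\<^sub>v col ?V j))"
      by (rule ab(3))
    also have "\<dots> \<longleftrightarrow> ((lam = \<epsilon> + \<phi> \<and> (\<exists>c. c \<noteq> 0 \<and> v = c \<cdot>\<^sub>v v_out n \<phi>)) \<or>
             (\<exists>k \<in> {1..<n}. lam = 2 * cos (theta n k) \<and> (\<exists>c. c \<noteq> 0 \<and> v = c \<cdot>\<^sub>v v_k n \<epsilon> k)))"
    proof
      assume "\<exists>j<n. lam = d j \<and> (\<exists>c. c \<noteq> 0 \<and> v = c \<cdot>\<^sub>v col ?V j)"
      then obtain j c where j: "j < n" "lam = d j" "c \<noteq> 0" "v = c \<cdot>\<^sub>v col ?V j" by blast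
      show "(lam = \<epsilon> + \<phi> \<and> (\<exists>c. c \<noteq> 0 \<and> v = c \<cdot>\<^sub>v v_out n \<phi>)) \<or>
             (\<exists>k \<in> {1..<n}. lam = 2 * cos (theta n k) \<and> (\<exists>c. c \<noteq> 0 \<and> v = c \<cdot>\<^sub>v v_k n \<epsilon> k))"
      proof (cases "j = 0")
        case True thus ?thesis using j col0 p d_def by auto
      next
        case False
        hence "j \<in> {1..<n}" using j by auto
        thus ?thesis using j colk[of j] False d_def by auto
      qed
    next
      assume "(lam = \<epsilon> + \<phi> \<and> (\<exists>c. c \<noteq> 0 \<and> v = c \<cdot>\<^sub>v v_out n \<phi>)) \<or>
             (\<exists>k \<in> {1..<n}. lam = 2 * cos (theta n k) \<and> (\<exists>c. c \<noteq> 0 \<and> v = c \<cdot>\<^sub>v v_k n \<epsilon> k))"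
      thus "\<exists>j<n. lam = d j \<and> (\<exists>c. c \<noteq> 0 \<and> v = c \<cdot>\<^sub>v col ?V j)"
      proof
        assume a: "lam = \<epsilon> + \<phi> \<and> (\<exists>c. c \<noteq> 0 \<and> v = c \<cdot>\<^sub>v v_out n \<phi>)"
        show ?thesis by (rule exI[of _ 0]) (use a n col0 p d_def in auto)
      next
        assume "\<exists>k \<in> {1..<n}. lam = 2 * cos (theta n k) \<and> (\<exists>c. c \<noteq> 0 \<and> v = c \<cdot>\<^sub>v v_k n \<epsilon> k)"
        then obtain k where k: "k \<in> {1..<n}" "lam = 2 * cos (theta n k)" "\<exists>c. c \<noteq> 0 \<and> v = c \<cdot>\<^sub>v v_k n \<epsilon> k" by blast
        show ?thesis by (rule exI[of _ k]) (use k colk[of k] d_def in auto)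
      qed
    qed
    finally show ?thesis .
  qed
  show ?thesis
    apply (intro conjI allI)
        apply (rule char)
    using p vout invV inv1 TVDW by auto
qed

end
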